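(* Let $p$ be an odd prime. If $M$ is a finite $A$-module (finite as a set), then $\Phi_nM=0$ for some $n$.
   Context: $A$ is the ring of degree zero stable operations in $p$-local complex $K$-theory. Fix $q$ primitive mod $p^2$, $\Psi^q\in A$ the Adams operation, $q_i=q^{(-1)^i\lfloor i/2\rfloor}$, $\Theta_n(X)=\prod_{i=1}^n(X-q_i)\in\mathbb{Z}_{(p)}[X]$, and $\Phi_n=\Theta_n(\Psi^q)\in A$. *)

theory Defs
  imports "HOL-Computational_Algebra.Polynomial" "HOL-Number_Theory.Number_Theory"
    "HOL-Algebra.Module"
begin

definition zp :: "nat \<Rightarrow> rat set" where
  "zp p = {r. \<not> (int p dvd snd (quotient_of r))}"

definition qi :: "int \<Rightarrow> nat \<Rightarrow> rat" where
  "qi q i = (if even i then (of_int q) ^ (i div 2) else (inverse (of_int q)) ^ (i div 2))"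

definition Theta :: "int \<Rightarrow> nat \<Rightarrow> rat poly" where
  "Theta q n = (\<Prod>i\<in>{1..n}. [:- qi q i, 1:])"

text \<open>Model of the ring A of degree zero stable operations in p-local K-theory:
  the inverse limit of Z_(p)[X]/(Theta_n(X)), with Psi^q corresponding to X.\<close>
definition A_carrier :: "nat \<Rightarrow> int \<Rightarrow> (nat \<Rightarrow> rat poly) set" where
  "A_carrier p q = {f. \<forall>n. (\<forall>k. Polynomial.coeff (f n) k \<in> zp p) \<and> (f n = 0 \<or> Polynomial.degree (f n) < n)
      \<and> f (Suc n) mod Theta q n = f n}"

definition A_ring :: "nat \<Rightarrow> int \<Rightarrow> (nat \<Rightarrow> rat poly) ring" where
  "A_ring p q = \<lparr>carrier = A_carrier p q,
      mult = (\<lambda>f g n. (f n * g n) mod Theta q n),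
      one = (\<lambda>n. 1 mod Theta q n),
      zero = (\<lambda>n. 0),
      add = (\<lambda>f g n. f n + g n)\<rparr>"

text \<open>Psi^q = X and Phi_n = Theta_n(Psi^q) in A.\<close>
definition Psi_q :: "int \<Rightarrow> nat \<Rightarrow> rat poly" where
  "Psi_q q = (\<lambda>k. [:0, 1:] mod Theta q k)"

definition Phi :: "int \<Rightarrow> nat \<Rightarrow> nat \<Rightarrow> rat poly" where
  "Phi q n = (\<lambda>k. Theta q n mod Theta q k)"

end

theory Submission
  imports Defs
begin


lemma zp_iff:
  assumes "prime p"
  shows "r \<in> zp p \<longleftrightarrow> (\<exists>a b. b \<noteq> 0 \<and> \<not> int p dvd b \<and> r = of_int a / of_int b)"
proof
  assume "r \<in> zp p"
  obtain a b where qb: "quotient_of r = (a, b)" by (cases "quotient_of r")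
  then have "b > 0" "r = of_int a / of_int b" using quotient_of_denom_pos quotient_of_div by auto
  with \<open>r \<in> zp p\<close> qb show "\<exists>a b. b \<noteq> 0 \<and> \<not> int p dvd b \<and> r = of_int a / of_int b"
    unfolding zp_def by (intro exI[of _ a] exI[of _ b]) auto
next
  assume "\<exists>a b. b \<noteq> 0 \<and> \<not> int p dvd b \<and> r = of_int a / of_int b"
  then obtain a b where ab: "b \<noteq> 0" "\<not> int p dvd b" "r = of_int a / of_int b" by blast
  obtain a' b' where qb: "quotient_of r = (a', b')" by (cases "quotient_of r")
  then have b'p: "b' > 0" and r': "r = of_int a' / of_int b'" and cop: "coprime a' b'"
    using quotient_of_denom_pos quotient_of_div quotient_of_coprime by auto
  have "of_int a' * of_int b = (of_int a * of_int b' :: rat)"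
    using ab(1,3) r' b'p by (simp add: field_simps)
  then have e: "a' * b = a * b'" by (metis of_int_eq_iff of_int_mult)
  then have "b' dvd a' * b" by simp
  then have "b' dvd b" using cop by (metis coprime_commute coprime_dvd_mult_right_iff)
  then have "\<not> int p dvd b'" using ab(2) dvd_trans by blast
  then show "r \<in> zp p" unfolding zp_def using qb by simp
qed

lemma zp_intro: "prime p \<Longrightarrow> b \<noteq> 0 \<Longrightarrow> \<not> int p dvd b \<Longrightarrow> r = of_int a / of_int b \<Longrightarrow> r \<in> zp p"
  using zp_iff by blast

lemma zp_int [simp]: "prime p \<Longrightarrow> of_int a \<in> zp p"
  by (rule zp_intro[of p 1 _ a]) (auto simp: prime_gt_1_nat)

lemma zp_0 [simp]: "prime p \<Longrightarrow> 0 \<in> zp p" using zp_int[of p 0] by simp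
lemma zp_1 [simp]: "prime p \<Longrightarrow> 1 \<in> zp p" using zp_int[of p 1] by simp
lemma zp_nat [simp]: "prime p \<Longrightarrow> of_nat a \<in> zp p" using zp_int[of p "int a"] by simp

lemma zp_add [simp, intro]: assumes "prime p" "x \<in> zp p" "y \<in> zp p" shows "x + y \<in> zp p"
proof -
  obtain a b c d where "b \<noteq> 0" "\<not> int p dvd b" "x = of_int a / of_int b"
     "d \<noteq> 0" "\<not> int p dvd d" "y = of_int c / of_int d" using assms zp_iff by metis
  moreover have "\<not> int p dvd b * d" using assms(1) \<open>\<not> int p dvd b\<close> \<open>\<not> int p dvd d\<close>
    by (simp add: prime_dvd_mult_iff)
  ultimately show ?thesis using assms(1)
    by (intro zp_intro[of p "b*d" _ "a*d + c*b"]) (auto simp: field_simps)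
qed

lemma zp_mult [simp, intro]: assumes "prime p" "x \<in> zp p" "y \<in> zp p" shows "x * y \<in> zp p"
proof -
  obtain a b c d where "b \<noteq> 0" "\<not> int p dvd b" "x = of_int a / of_int b"
     "d \<noteq> 0" "\<not> int p dvd d" "y = of_int c / of_int d" using assms zp_iff by metis
  moreover have "\<not> int p dvd b * d" using assms(1) \<open>\<not> int p dvd b\<close> \<open>\<not> int p dvd d\<close>
    by (simp add: prime_dvd_mult_iff)
  ultimately show ?thesis using assms(1)
    by (intro zp_intro[of p "b*d" _ "a*c"]) (auto simp: field_simps)
qed

lemma zp_uminus [simp, intro]: assumes "prime p" "x \<in> zp p" shows "- x \<in> zp p"
  using zp_mult[OF assms(1) zp_int[OF assms(1), of "-1"] assms(2)] by simp

lemma zp_diff [simp, intro]: assumes "prime p" "x \<in> zp p" "y \<in> zp p" shows "x - y \<in> zp p"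
  using zp_add[OF assms(1,2) zp_uminus[OF assms(1,3)]] by simp

lemma zp_power [simp, intro]: assumes "prime p" "x \<in> zp p" shows "x ^ n \<in> zp p"
  using assms by (induction n) auto

lemma zp_sum [intro]: assumes "prime p" "\<And>i. i \<in> A \<Longrightarrow> f i \<in> zp p" shows "sum f A \<in> zp p"
  using assms(2) by (induction A rule: infinite_finite_induct) (auto simp: assms(1))

lemma zp_prod [intro]: assumes "prime p" "\<And>i. i \<in> A \<Longrightarrow> f i \<in> zp p" shows "prod f A \<in> zp p"
  using assms(2) by (induction A rule: infinite_finite_induct) (auto simp: assms(1))

lemma zp_inv_int: assumes "prime p" "\<not> int p dvd a" shows "inverse (of_int a) \<in> zp p"
  using assms by (intro zp_intro[of p a _ 1]) (auto simp: field_simps)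

lemma zp_unit:
  assumes "prime p" "s \<in> zp p"
  shows "1 - of_nat p * s \<noteq> 0" "inverse (1 - of_nat p * s) \<in> zp p"
proof -
  obtain a b where ab: "b \<noteq> 0" "\<not> int p dvd b" "s = of_int a / of_int b" using assms zp_iff by metis
  have nd: "\<not> int p dvd (b - int p * a)" using ab(2)
    by (metis dvd_diff_commute dvd_triv_left dvd_add_right_iff diff_add_cancel)
  then have nz: "b - int p * a \<noteq> 0" by auto
  have e: "1 - of_nat p * s = of_int (b - int p * a) / of_int b" using ab by (simp add: field_simps)
  show "1 - of_nat p * s \<noteq> 0" unfolding e using nz ab(1) by (simp only: divide_eq_0_iff of_int_eq_0_iff) simp
  show "inverse (1 - of_nat p * s) \<in> zp p" unfolding e using assms(1) ab nz
    by (intro zp_intro[of p "b - int p * a" _ b]) (auto simp: field_simps nd)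
qed



definition Pz :: "nat \<Rightarrow> rat poly set" where
  "Pz p = {f. \<forall>k. Polynomial.coeff f k \<in> zp p}"

context fixes p :: nat assumes pp: "prime p" begin

lemma Pz_const [simp]: "[:c:] \<in> Pz p \<longleftrightarrow> c \<in> zp p"
  unfolding Pz_def using pp by (auto simp: coeff_pCons split: nat.splits)

lemma Pz_0 [simp]: "0 \<in> Pz p" unfolding Pz_def using pp by simp
lemma Pz_1 [simp]: "1 \<in> Pz p" unfolding Pz_def using pp by (simp add: coeff_1)

lemma Pz_pCons [intro]: "c \<in> zp p \<Longrightarrow> f \<in> Pz p \<Longrightarrow> pCons c f \<in> Pz p"
  unfolding Pz_def by (auto simp: coeff_pCons split: nat.splits)

lemma Pz_add [intro]: "f \<in> Pz p \<Longrightarrow> g \<in> Pz p \<Longrightarrow> f + g \<in> Pz p"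
  unfolding Pz_def using pp by auto
lemma Pz_uminus [intro]: "f \<in> Pz p \<Longrightarrow> - f \<in> Pz p"
  unfolding Pz_def using pp by auto
lemma Pz_diff [intro]: "f \<in> Pz p \<Longrightarrow> g \<in> Pz p \<Longrightarrow> f - g \<in> Pz p"
  unfolding Pz_def using pp by auto
lemma Pz_smult [intro]: "c \<in> zp p \<Longrightarrow> f \<in> Pz p \<Longrightarrow> Polynomial.smult c f \<in> Pz p"
  unfolding Pz_def using pp by auto
lemma Pz_monom [intro]: "c \<in> zp p \<Longrightarrow> Polynomial.monom c n \<in> Pz p"
  unfolding Pz_def using pp by (auto simp: coeff_monom)
lemma Pz_mult [intro]: "f \<in> Pz p \<Longrightarrow> g \<in> Pz p \<Longrightarrow> f * g \<in> Pz p"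
  unfolding Pz_def using pp by (auto simp: coeff_mult intro!: zp_sum)
lemma Pz_power [intro]: "f \<in> Pz p \<Longrightarrow> f ^ n \<in> Pz p"
  by (induction n) auto
lemma Pz_prod [intro]: "(\<And>i. i \<in> A \<Longrightarrow> f i \<in> Pz p) \<Longrightarrow> prod f A \<in> Pz p"
  by (induction A rule: infinite_finite_induct) auto

lemma Pz_poly: "f \<in> Pz p \<Longrightarrow> x \<in> zp p \<Longrightarrow> poly f x \<in> zp p"
  unfolding Pz_def poly_altdef using pp by (auto intro!: zp_sum)

lemma Pz_divmod:
  assumes g: "g \<in> Pz p" "lead_coeff g = 1"
  shows "f \<in> Pz p \<Longrightarrow> f div g \<in> Pz p \<and> f mod g \<in> Pz p"
proof (induction "degree f" arbitrary: f rule: less_induct)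
  case less
  have g0: "g \<noteq> 0" using g by auto
  show ?case
  proof (cases "f = 0 \<or> degree f < degree g")
    case True
    then show ?thesis using less.prems by (auto simp: div_poly_less mod_poly_less)
  next
    case False
    then have f0: "f \<noteq> 0" and dg: "degree g \<le> degree f" by auto
    define c where "c = Polynomial.monom (lead_coeff f) (degree f - degree g)"
    define f' where "f' = f - c * g"
    have c: "c \<in> Pz p" unfolding c_def using less.prems pp by (auto simp: Pz_def)
    have f': "f' \<in> Pz p" unfolding f'_def using c less.prems g by auto
    have "Polynomial.coeff f' (degree f) = 0"
      unfolding f'_def c_def using dg g by (simp add: coeff_monom_mult)
    moreover have "degree f' \<le> degree f"
      unfolding f'_def c_def
      by (rule degree_diff_le) (auto intro!: order.trans[OF degree_mult_le] simp: degree_monom_eq dg f0)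
    ultimately have lt: "f' = 0 \<or> degree f' < degree f"
      by (metis le_neq_implies_less leading_coeff_0_iff)
    have IH: "f' div g \<in> Pz p \<and> f' mod g \<in> Pz p"
    proof (cases "f' = 0")
      case True then show ?thesis by simp
    next
      case False then show ?thesis using lt less.hyps f' by blast
    qed
    have fe: "f = f' + c * g" unfolding f'_def by simp
    have "f div g = c + f' div g" unfolding fe using g0 by (rule div_mult_self1)
    moreover have "f mod g = f' mod g" unfolding fe by (rule mod_mult_self1)
    ultimately show ?thesis using IH c by auto
  qed
qed

end


definition emb :: "int \<Rightarrow> rat poly \<Rightarrow> nat \<Rightarrow> rat poly" where
  "emb q g = (\<lambda>n. g mod Theta q n)"

lemma Theta_0 [simp]: "Theta q 0 = 1" unfolding Theta_def by simp

lemma Theta_Suc: "Theta q (Suc n) = Theta q n * [:- qi q (Suc n), 1:]"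
  unfolding Theta_def by (simp add: prod.nat_ivl_Suc' mult.commute)

lemma Theta_lead [simp]: "lead_coeff (Theta q n) = 1"
  unfolding Theta_def lead_coeff_prod by simp

lemma Theta_ne0 [simp]: "Theta q n \<noteq> 0"
  using Theta_lead[of q n] by (metis leading_coeff_0_iff zero_neq_one)

lemma Theta_degree [simp]: "degree (Theta q n) = n"
proof (induction n)
  case (Suc n)
  have "degree (Theta q n * [:- qi q (Suc n), 1:]) = degree (Theta q n) + degree [:- qi q (Suc n), 1:]"
    by (rule degree_mult_eq) auto
  then show ?case using Suc by (simp add: Theta_Suc del: mult_pCons_right)
qed simp

lemma Theta_dvd: "m \<le> n \<Longrightarrow> Theta q m dvd Theta q n"
  unfolding Theta_def by (rule prod_dvd_prod_subset) auto

lemma Theta_add: "Theta q (m + k) = Theta q m * (\<Prod>i\<in>{m+1..m+k}. [:- qi q i, 1:])"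
  by (induction k) (auto simp: Theta_Suc prod.nat_ivl_Suc' mult_ac)

lemma A_mult [simp]: "mult (A_ring p q) f g = (\<lambda>n. (f n * g n) mod Theta q n)"
  unfolding A_ring_def by simp
lemma A_add [simp]: "add (A_ring p q) f g = (\<lambda>n. f n + g n)"
  unfolding A_ring_def by simp
lemma A_one [simp]: "one (A_ring p q) = emb q 1"
  unfolding A_ring_def emb_def by simp
lemma A_zero [simp]: "zero (A_ring p q) = (\<lambda>n. 0)"
  unfolding A_ring_def by simp
lemma A_carrier [simp]: "carrier (A_ring p q) = A_carrier p q"
  unfolding A_ring_def by simp

lemma Phi_emb: "Phi q n = emb q (Theta q n)"
  unfolding Phi_def emb_def by simp

lemma emb_mult: "mult (A_ring p q) (emb q f) (emb q g) = emb q (f * g)"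
  unfolding emb_def by (simp add: mod_mult_eq)

lemma emb_add: "add (A_ring p q) (emb q f) (emb q g) = emb q (f + g)"
  unfolding emb_def by (simp add: poly_mod_add_left)

context fixes p :: nat and q :: int assumes pp: "prime p" and nq: "\<not> int p dvd q" begin

lemma qi_zp [simp]: "qi q i \<in> zp p"
  unfolding qi_def using pp zp_inv_int[OF pp nq] by auto

lemma Theta_Pz [simp]: "Theta q n \<in> Pz p"
  unfolding Theta_def using pp by (intro Pz_prod) auto

lemma emb_carrier: "g \<in> Pz p \<Longrightarrow> emb q g \<in> A_carrier p q"
proof -
  assume g: "g \<in> Pz p"
  have "g mod Theta q n \<in> Pz p" for n using Pz_divmod[OF pp Theta_Pz Theta_lead g] by blast
  moreover have "g mod Theta q n = 0 \<or> degree (g mod Theta q n) < n" for n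
    using degree_mod_less[OF Theta_ne0, of g q n] by simp
  moreover have "(g mod Theta q (Suc n)) mod Theta q n = g mod Theta q n" for n
    by (rule mod_mod_cancel) (rule Theta_dvd, simp)
  ultimately show ?thesis unfolding A_carrier_def emb_def Pz_def by auto
qed

end


context fixes p :: nat and q :: int assumes pp: "prime p" and nq: "\<not> int p dvd q" begin

lemma emb_inverse:
  assumes h: "h \<in> Pz p" and hu: "\<And>i. poly h (qi q i) \<noteq> 0 \<and> inverse (poly h (qi q i)) \<in> zp p"
  shows "\<exists>v \<in> A_carrier p q. mult (A_ring p q) (emb q h) v = emb q 1"
proof -
  define u where "u = rec_nat 0 (\<lambda>n un. un - Polynomial.smult
     (poly ((h * un - 1) div Theta q n) (qi q (Suc n)) * inverse (poly h (qi q (Suc n)))) (Theta q n))"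
  have u0: "u 0 = 0" unfolding u_def by simp
  have uS: "u (Suc n) = u n - Polynomial.smult
     (poly ((h * u n - 1) div Theta q n) (qi q (Suc n)) * inverse (poly h (qi q (Suc n)))) (Theta q n)" for n
    unfolding u_def by simp
  have inv: "u n \<in> Pz p \<and> Theta q n dvd h * u n - 1" for n
  proof (induction n)
    case 0 then show ?case by (simp add: u0 pp)
  next
    case (Suc n)
    define a where "a = qi q (Suc n)"
    define w where "w = (h * u n - 1) div Theta q n"
    define c where "c = poly w a * inverse (poly h a)"
    have "h * u n - 1 \<in> Pz p" using Suc h pp by (intro Pz_diff Pz_mult) auto
    then have w: "w \<in> Pz p" unfolding w_def
      using Pz_divmod[OF pp Theta_Pz[OF pp nq] Theta_lead] by blast
    have c: "c \<in> zp p" unfolding c_def a_def using hu pp Pz_poly[OF pp w] qi_zp[OF pp nq] by auto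
    have us: "u (Suc n) = u n - Polynomial.smult c (Theta q n)"
      unfolding uS c_def w_def a_def by simp
    have hw: "h * u n - 1 = Theta q n * w" unfolding w_def using Suc by simp
    have e: "h * u (Suc n) - 1 = Theta q n * (w - Polynomial.smult c h)"
      unfolding us using hw by (simp add: algebra_simps)
    have "poly (w - Polynomial.smult c h) a = 0" unfolding c_def using hu[of "Suc n"] a_def by simp
    then have "[:-a, 1:] dvd (w - Polynomial.smult c h)" using poly_eq_0_iff_dvd by blast
    then have "Theta q (Suc n) dvd h * u (Suc n) - 1" unfolding e Theta_Suc a_def by (simp only: mult_dvd_mono dvd_refl)
    moreover have "u (Suc n) \<in> Pz p" unfolding us using Suc c pp nq
      by (intro Pz_diff Pz_smult) auto
    ultimately show ?case by simp
  qed
  define v where "v = (\<lambda>n. u n mod Theta q n)"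
  have "v \<in> A_carrier p q"
  proof -
    have "v n \<in> Pz p" for n unfolding v_def using Pz_divmod[OF pp Theta_Pz[OF pp nq] Theta_lead] inv by blast
    moreover have "v n = 0 \<or> degree (v n) < n" for n
      unfolding v_def using degree_mod_less[OF Theta_ne0, of "u n" q n] by simp
    moreover have "v (Suc n) mod Theta q n = v n" for n
    proof -
      have "v (Suc n) mod Theta q n = u (Suc n) mod Theta q n"
        unfolding v_def by (rule mod_mod_cancel) (rule Theta_dvd, simp)
      also have "\<dots> = u n mod Theta q n"
        unfolding uS by (simp add: mod_eq_dvd_iff dvd_smult)
      finally show ?thesis unfolding v_def .
    qed
    ultimately show ?thesis unfolding A_carrier_def Pz_def by auto
  qed
  moreover have "mult (A_ring p q) (emb q h) v = emb q 1"
    unfolding A_mult emb_def v_def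
  proof
    fix n
    have "(h mod Theta q n * (u n mod Theta q n)) mod Theta q n = (h * u n) mod Theta q n"
      by (simp add: mod_mult_eq)
    also have "\<dots> = 1 mod Theta q n" using inv[of n] by (simp add: mod_eq_dvd_iff)
    finally show "(h mod Theta q n * (u n mod Theta q n)) mod Theta q n = 1 mod Theta q n" .
  qed
  ultimately show ?thesis by blast
qed

end


lemma fermat_int:
  fixes q :: int assumes pp: "prime p" and nq: "\<not> int p dvd q"
  shows "[q ^ (p - 1) = 1] (mod int p)"
proof -
  define r where "r = nat (q mod int p)"
  have p0: "int p > 0" using pp prime_gt_0_nat by simp
  have qr: "[q = int r] (mod int p)" unfolding r_def cong_def using p0 by simp
  have "\<not> p dvd r"
  proof
    assume "p dvd r"
    then have "int p dvd int r" by simp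
    then have "int p dvd q" using qr by (metis cong_dvd_iff)
    with nq show False by simp
  qed
  then have "[r ^ (p - 1) = 1] (mod p)" using fermat_theorem pp by blast
  then have "[int r ^ (p - 1) = 1] (mod int p)" using cong_int_iff by (metis of_nat_1 of_nat_power)
  moreover have "[q ^ (p - 1) = int r ^ (p - 1)] (mod int p)" using qr by (rule cong_pow)
  ultimately show ?thesis using cong_trans by blast
qed

lemma cong_exp:
  fixes q :: int assumes pp: "prime p" and nq: "\<not> int p dvd q"
    and st: "s mod (p - 1) = t mod (p - 1)"
  shows "[q ^ s = q ^ t] (mod int p)"
proof -
  have red: "[q ^ s = q ^ (s mod (p - 1))] (mod int p)" for s
  proof -
    have "q ^ s = q ^ ((p - 1) * (s div (p - 1)) + s mod (p - 1))" by simp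
    also have "\<dots> = (q ^ (p - 1)) ^ (s div (p - 1)) * q ^ (s mod (p - 1))"
      by (simp only: power_add power_mult)
    finally have "q ^ s = (q ^ (p - 1)) ^ (s div (p - 1)) * q ^ (s mod (p - 1))" .
    moreover have "[(q ^ (p - 1)) ^ (s div (p - 1)) * q ^ (s mod (p - 1)) = 1 ^ (s div (p - 1)) * q ^ (s mod (p - 1))] (mod int p)"
      by (intro cong_mult cong_pow fermat_int[OF pp nq] cong_refl)
    ultimately show ?thesis by simp
  qed
  have "[q ^ s = q ^ (t mod (p - 1))] (mod int p)" using red[of s] st by simp
  then show ?thesis using red[of t] cong_sym cong_trans by blast
qed

definition blk :: "int \<Rightarrow> nat \<Rightarrow> nat \<Rightarrow> rat poly" where
  "blk q p j = (\<Prod>i\<in>{2*(p-1)*j+1..2*(p-1)*j+2*(p-1)}. [:- qi q i, 1:])"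

lemma Theta_blk: "Theta q (2*(p-1)*Suc j) = Theta q (2*(p-1)*j) * blk q p j"
proof -
  have e: "2*(p-1)*Suc j = 2*(p-1)*j + 2*(p-1)" by (metis mult_Suc_right add.commute)
  show ?thesis unfolding e blk_def by (rule Theta_add)
qed

context fixes p :: nat and q :: int assumes pp: "prime p" and nq: "\<not> int p dvd q" begin

lemma p1: "p - 1 > 0" using pp prime_gt_1_nat by simp

lemma q0: "q \<noteq> 0" using nq by auto

lemma good_factor: "\<exists>i \<in> {2*(p-1)*j+1..2*(p-1)*j+2*(p-1)}. \<exists>s \<in> zp p. qi q x - qi q i = of_nat p * s"
proof -
  define base where "base = (p-1)*j"
  have pick: "\<exists>t. base + 1 \<le> t \<and> t \<le> base + (p-1) \<and> t mod (p-1) = r" if "r < p - 1" for r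
  proof (cases "r = 0")
    case True
    have "base + (p-1) = (p-1)*(Suc j)" unfolding base_def by (metis mult_Suc_right add.commute)
    then have "(base + (p-1)) mod (p-1) = 0" by simp
    then show ?thesis using p1 True by (intro exI[of _ "base + (p-1)"]) simp
  next
    case False then show ?thesis using that by (intro exI[of _ "base + r"]) (simp add: base_def)
  qed
  have pq: "\<exists>k. q ^ a - q ^ b = int p * k" if "a mod (p-1) = b mod (p-1)" for a b
    using cong_exp[OF pp nq that] by (metis cong_iff_dvd_diff dvdE)
  define s where "s = x div 2"
  show ?thesis
  proof (cases "even x")
    case True
    obtain t where t: "base + 1 \<le> t" "t \<le> base + (p-1)" "t mod (p-1) = s mod (p-1)"
      using pick[of "s mod (p-1)"] p1 by auto
    obtain k where k: "q ^ s - q ^ t = int p * k" using pq[of s t] t(3) by auto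
    have "qi q x - qi q (2*t) = of_int (q ^ s - q ^ t)" using True unfolding qi_def s_def by simp
    also have "\<dots> = of_nat p * of_int k" unfolding k by simp
    finally have "qi q x - qi q (2*t) = of_nat p * of_int k" .
    moreover have "2*t \<in> {2*(p-1)*j+1..2*(p-1)*j+2*(p-1)}" using t unfolding base_def by auto
    moreover have "of_int k \<in> zp p" using pp by simp
    ultimately show ?thesis by blast
  next
    case False
    define r where "r = (p - 1 - s mod (p-1)) mod (p-1)"
    have r: "r < p - 1" unfolding r_def using p1 by simp
    obtain t where t: "base + 1 \<le> t" "t \<le> base + (p-1)" "t mod (p-1) = r"
      using pick[OF r] by auto
    have "(s + t) mod (p-1) = (s mod (p-1) + t mod (p-1)) mod (p-1)" by (simp add: mod_add_eq)
    also have "\<dots> = (s mod (p-1) + (p - 1 - s mod (p-1))) mod (p-1)"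
      unfolding t(3) r_def by (rule mod_add_right_eq)
    also have "\<dots> = (p - 1) mod (p - 1)"
      by (simp only: le_add_diff_inverse less_imp_le[OF mod_less_divisor[OF p1]])
    finally have "(s + t) mod (p-1) = 0 mod (p - 1)" by simp
    then obtain k where k: "q ^ (s + t) - q ^ 0 = int p * k" using pq by blast
    have "qi q x - qi q (2*t) = inverse (of_int q) ^ s - of_int q ^ t" using False unfolding qi_def s_def by simp
    also have "\<dots> = inverse (of_int q) ^ s * (1 - of_int (q ^ (s + t)))"
    proof -
      have iq: "inverse (of_int q :: rat) ^ s * of_int q ^ s = 1" using q0
        by (simp flip: power_mult_distrib)
      have "inverse (of_int q :: rat) ^ s * (1 - of_int (q ^ (s + t))) =
         inverse (of_int q) ^ s - (inverse (of_int q) ^ s * of_int q ^ s) * of_int q ^ t"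
        by (simp only: right_diff_distrib power_add of_int_mult of_int_power mult.assoc mult_1_right)
      then show ?thesis using iq by simp
    qed
    also have "\<dots> = of_nat p * (- (inverse (of_int q) ^ s * of_int k))"
      using k by (simp add: algebra_simps)
    finally have "qi q x - qi q (2*t) = of_nat p * (- (inverse (of_int q) ^ s * of_int k))" .
    moreover have "2*t \<in> {2*(p-1)*j+1..2*(p-1)*j+2*(p-1)}" using t unfolding base_def by auto
    moreover have "- (inverse (of_int q) ^ s * of_int k) \<in> zp p"
      by (intro zp_uminus zp_mult zp_power zp_inv_int pp nq zp_int)
    ultimately show ?thesis by blast
  qed
qed

lemma blk_Pz: "blk q p j \<in> Pz p"
  unfolding blk_def using pp nq by (intro Pz_prod) auto

lemma blk_div: "\<exists>s \<in> zp p. poly (blk q p j) (qi q x) = of_nat p * s"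
proof -
  define I where "I = {2*(p-1)*j+1..2*(p-1)*j+2*(p-1)}"
  obtain i s where i: "i \<in> I" "s \<in> zp p" "qi q x - qi q i = of_nat p * s"
    using good_factor unfolding I_def by blast
  have "poly (blk q p j) (qi q x) = (\<Prod>k\<in>I. qi q x - qi q k)"
    unfolding blk_def I_def poly_prod by simp
  also have "\<dots> = (qi q x - qi q i) * (\<Prod>k\<in>I - {i}. qi q x - qi q k)"
    using i(1) by (simp add: I_def prod.remove)
  also have "\<dots> = of_nat p * (s * (\<Prod>k\<in>I - {i}. qi q x - qi q k))" using i by simp
  finally have "poly (blk q p j) (qi q x) = of_nat p * (s * (\<Prod>k\<in>I - {i}. qi q x - qi q k))" .
  moreover have "s * (\<Prod>k\<in>I - {i}. qi q x - qi q k) \<in> zp p"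
    using i(2) pp qi_zp[OF pp nq] by (intro zp_mult zp_prod zp_diff) auto
  ultimately show ?thesis by blast
qed

end


lemma nilpotent_action:
  fixes p :: nat and q :: int and M :: "(nat \<Rightarrow> rat poly, 'b) module"
  assumes pp: "prime p" and nq: "\<not> int p dvd q"
    and mod: "module (A_ring p q) M" and fin: "finite (carrier M)"
    and g: "g \<in> Pz p" and gdiv: "\<And>x. \<exists>s \<in> zp p. poly g (qi q x) = of_nat p * s"
  shows "\<exists>k. \<forall>m \<in> carrier M. emb q (g ^ k) \<odot>\<^bsub>M\<^esub> m = \<zero>\<^bsub>M\<^esub>"
proof -
  interpret module "A_ring p q" M by (rule mod)
  have embc: "emb q f \<in> carrier (A_ring p q)" if "f \<in> Pz p" for f
    using emb_carrier[OF pp nq that] by simp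
  define F where "F = (\<lambda>k. restrict (\<lambda>m. emb q (g ^ k) \<odot>\<^bsub>M\<^esub> m) (carrier M))"
  have gk: "emb q (g ^ k) \<in> carrier (A_ring p q)" for k using embc g Pz_power[OF pp] by blast
  have "range F \<subseteq> (\<Pi>\<^sub>E i \<in> carrier M. carrier M)"
    unfolding F_def using gk smult_closed by auto
  moreover have "finite (\<Pi>\<^sub>E i \<in> carrier M. carrier M)" using fin by (intro finite_PiE) auto
  ultimately have "finite (range F)" using finite_subset by blast
  then have "\<not> inj F" using finite_imageD infinite_UNIV_nat by blast
  then obtain a b where ab: "a \<noteq> b" "F a = F b" unfolding inj_def by blast
  then obtain a b where ab: "a < b" "F a = F b"
    by (metis linorder_neqE_nat)
  define c where "c = b - a"
  have c0: "c > 0" and bac: "b = a + c" using ab unfolding c_def by auto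
  define h where "h = 1 - g ^ c"
  have h: "h \<in> Pz p" unfolding h_def using g by (intro Pz_diff Pz_power) (auto simp: pp)
  have hu: "poly h (qi q i) \<noteq> 0 \<and> inverse (poly h (qi q i)) \<in> zp p" for i
  proof -
    obtain s where s: "s \<in> zp p" "poly g (qi q i) = of_nat p * s" using gdiv by blast
    have "poly h (qi q i) = 1 - (of_nat p * s) ^ c" unfolding h_def using s by simp
    also have "\<dots> = 1 - of_nat p * (of_nat p ^ (c - 1) * s ^ c)"
      using c0 by (cases c) (auto simp: power_mult_distrib)
    finally show ?thesis using zp_unit[OF pp, of "of_nat p ^ (c - 1) * s ^ c"] s pp by auto
  qed
  obtain v where v: "v \<in> A_carrier p q" "mult (A_ring p q) (emb q h) v = emb q 1"
    using emb_inverse[OF pp nq h hu] by blast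
  have gac: "emb q (g ^ a) \<in> carrier (A_ring p q)" "emb q (g ^ a * h) \<in> carrier (A_ring p q)"
    "emb q (g ^ b) \<in> carrier (A_ring p q)" "emb q h \<in> carrier (A_ring p q)"
    using g h pp by (simp_all only: A_carrier) (intro emb_carrier[OF pp nq] Pz_power Pz_mult; simp add: pp)+
  have vc: "v \<in> carrier (A_ring p q)" using v by simp
  have zero: "emb q (g ^ a * h) \<odot>\<^bsub>M\<^esub> m = \<zero>\<^bsub>M\<^esub>" if m: "m \<in> carrier M" for m
  proof -
    have "g ^ a = g ^ a * h + g ^ b" unfolding h_def bac by (simp add: algebra_simps power_add)
    then have "emb q (g ^ a) = add (A_ring p q) (emb q (g ^ a * h)) (emb q (g ^ b))"
      unfolding emb_add by (rule arg_cong[where f="emb q"])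
    then have "emb q (g ^ a) \<odot>\<^bsub>M\<^esub> m = emb q (g ^ a * h) \<odot>\<^bsub>M\<^esub> m \<oplus>\<^bsub>M\<^esub> emb q (g ^ b) \<odot>\<^bsub>M\<^esub> m"
      using smult_l_distr gac m by simp
    moreover have "emb q (g ^ a) \<odot>\<^bsub>M\<^esub> m = emb q (g ^ b) \<odot>\<^bsub>M\<^esub> m"
      using ab(2) m unfolding F_def by (metis restrict_apply')
    ultimately show ?thesis using gac m by (metis M.add.r_cancel_one' smult_closed)
  qed
  have "emb q (g ^ a) = mult (A_ring p q) (emb q (g ^ a)) (one (A_ring p q))"
    by (rule R.r_one[OF gac(1), symmetric])
  also have "\<dots> = mult (A_ring p q) (emb q (g ^ a)) (mult (A_ring p q) (emb q h) v)"
    by (simp only: v(2) A_one)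
  also have "\<dots> = mult (A_ring p q) (mult (A_ring p q) (emb q (g ^ a)) (emb q h)) v"
    by (rule R.m_assoc[OF gac(1) gac(4) vc, symmetric])
  also have "\<dots> = mult (A_ring p q) (emb q (g ^ a * h)) v"
    by (simp only: emb_mult)
  also have "\<dots> = mult (A_ring p q) v (emb q (g ^ a * h))"
    by (rule R.m_comm[OF gac(2) vc])
  finally have e: "emb q (g ^ a) = mult (A_ring p q) v (emb q (g ^ a * h))" .
  show ?thesis
  proof (intro exI ballI)
    fix m assume m: "m \<in> carrier M"
    have "emb q (g ^ a) \<odot>\<^bsub>M\<^esub> m = v \<odot>\<^bsub>M\<^esub> (emb q (g ^ a * h) \<odot>\<^bsub>M\<^esub> m)"
      unfolding e using smult_assoc1 vc gac m by blast
    also have "\<dots> = \<zero>\<^bsub>M\<^esub>" using zero[OF m] vc by simp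
    finally show "emb q (g ^ a) \<odot>\<^bsub>M\<^esub> m = \<zero>\<^bsub>M\<^esub>" .
  qed
qed



lemma chain_main:
  fixes p :: nat and q :: int and M :: "(nat \<Rightarrow> rat poly, 'b) module"
  assumes pp: "prime p" and nq: "\<not> int p dvd q"
    and mod: "module (A_ring p q) M" and fin: "finite (carrier M)"
  shows "\<exists>n. \<forall>m \<in> carrier M. Phi q n \<odot>\<^bsub>M\<^esub> m = \<zero>\<^bsub>M\<^esub>"
proof -
  interpret module "A_ring p q" M by (rule mod)
  have embc: "emb q f \<in> carrier (A_ring p q)" if "f \<in> Pz p" for f
    using emb_carrier[OF pp nq that] by simp
  define E where "E = (\<lambda>j. emb q (Theta q (2*(p-1)*j)))"
  define B where "B = (\<lambda>j. emb q (blk q p j))"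
  define W where "W = (\<lambda>j. (\<lambda>m. E j \<odot>\<^bsub>M\<^esub> m) ` carrier M)"
  have Ec: "E j \<in> carrier (A_ring p q)" for j unfolding E_def by (rule embc) (simp add: pp nq)
  have Bc: "B j \<in> carrier (A_ring p q)" for j unfolding B_def by (rule embc) (rule blk_Pz[OF pp nq])
  have ES1: "E (Suc j) = mult (A_ring p q) (E j) (B j)" for j
    unfolding E_def B_def emb_mult Theta_blk ..
  have ES2: "E (Suc j) = mult (A_ring p q) (B j) (E j)" for j
    unfolding ES1 by (rule R.m_comm[OF Ec Bc])
  have WM: "W j \<subseteq> carrier M" for j unfolding W_def using Ec by auto
  have Wfin: "finite (W j)" for j using WM fin finite_subset by blast
  have Wsub: "W (Suc j) \<subseteq> W j" for j
  proof
    fix x assume "x \<in> W (Suc j)"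
    then obtain m where m: "m \<in> carrier M" "x = E (Suc j) \<odot>\<^bsub>M\<^esub> m" unfolding W_def by blast
    then have "x = E j \<odot>\<^bsub>M\<^esub> (B j \<odot>\<^bsub>M\<^esub> m)" unfolding ES1 using smult_assoc1 Ec Bc by blast
    then show "x \<in> W j" unfolding W_def using m(1) Bc by blast
  qed
  have Wimg: "W (Suc j) = (\<lambda>w. B j \<odot>\<^bsub>M\<^esub> w) ` W j" for j
  proof -
    have "W (Suc j) = (\<lambda>m. B j \<odot>\<^bsub>M\<^esub> (E j \<odot>\<^bsub>M\<^esub> m)) ` carrier M"
      unfolding W_def ES2 using smult_assoc1 Ec Bc by (intro image_cong) auto
    then show ?thesis unfolding W_def by (simp add: image_image)
  qed
  have "\<exists>j. W (Suc j) = W j"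
  proof (rule ccontr)
    assume "\<not> ?thesis"
    then have ps: "W (Suc j) \<subset> W j" for j using Wsub by auto
    have "card (W j) + j \<le> card (W 0)" for j
    proof (induction j)
      case (Suc j)
      have "card (W (Suc j)) < card (W j)" using psubset_card_mono[OF Wfin ps] .
      then show ?case using Suc by simp
    qed simp
    from this[of "Suc (card (W 0))"] show False by simp
  qed
  then obtain j where j: "W (Suc j) = W j" by blast
  obtain k where k: "\<And>m. m \<in> carrier M \<Longrightarrow> emb q (blk q p j ^ k) \<odot>\<^bsub>M\<^esub> m = \<zero>\<^bsub>M\<^esub>"
    using nilpotent_action[OF pp nq mod fin blk_Pz[OF pp nq] blk_div[OF pp nq]] by blast
  have pw: "(\<lambda>w. emb q (blk q p j ^ i) \<odot>\<^bsub>M\<^esub> w) ` W j = W j" for i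
  proof (induction i)
    case 0
    have "emb q (blk q p j ^ 0) \<odot>\<^bsub>M\<^esub> w = w" if "w \<in> W j" for w
    proof -
      have "w \<in> carrier M" using that WM by blast
      then have "one (A_ring p q) \<odot>\<^bsub>M\<^esub> w = w" by (rule smult_one)
      then show ?thesis by (simp only: power_0 A_one)
    qed
    then show ?case by (simp add: image_cong)
  next
    case (Suc i)
    have bi: "emb q (blk q p j ^ i) \<in> carrier (A_ring p q)"
      by (rule embc) (intro Pz_power blk_Pz pp nq)
    have e: "emb q (blk q p j ^ Suc i) = mult (A_ring p q) (emb q (blk q p j ^ i)) (B j)"
      unfolding B_def emb_mult by (simp only: power_Suc2)
    have "(\<lambda>w. emb q (blk q p j ^ Suc i) \<odot>\<^bsub>M\<^esub> w) ` W j
        = (\<lambda>w. emb q (blk q p j ^ i) \<odot>\<^bsub>M\<^esub> (B j \<odot>\<^bsub>M\<^esub> w)) ` W j"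
    proof (rule image_cong[OF refl])
      fix w assume "w \<in> W j"
      then have "w \<in> carrier M" using WM by blast
      then show "emb q (blk q p j ^ Suc i) \<odot>\<^bsub>M\<^esub> w = emb q (blk q p j ^ i) \<odot>\<^bsub>M\<^esub> (B j \<odot>\<^bsub>M\<^esub> w)"
        unfolding e by (rule smult_assoc1[OF bi Bc])
    qed
    also have "\<dots> = (\<lambda>w. emb q (blk q p j ^ i) \<odot>\<^bsub>M\<^esub> w) ` ((\<lambda>w. B j \<odot>\<^bsub>M\<^esub> w) ` W j)"
      by (simp add: image_image)
    also have "\<dots> = W j" using Wimg[of j] j Suc.IH by simp
    finally show ?case .
  qed
  have "W j \<subseteq> {\<zero>\<^bsub>M\<^esub>}"
  proof
    fix x assume "x \<in> W j"
    then have "x \<in> (\<lambda>w. emb q (blk q p j ^ k) \<odot>\<^bsub>M\<^esub> w) ` W j" using pw by simp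
    then show "x \<in> {\<zero>\<^bsub>M\<^esub>}" using k WM by auto
  qed
  then have "\<forall>m \<in> carrier M. Phi q (2*(p-1)*j) \<odot>\<^bsub>M\<^esub> m = \<zero>\<^bsub>M\<^esub>"
    unfolding W_def E_def Phi_emb by auto
  then show ?thesis by blast
qed

theorem proposition3p5:
  fixes p :: nat and q :: int and M :: "(nat \<Rightarrow> rat poly, 'b) module"
  assumes "prime p" and "odd p"
    and "residue_primroot (p^2) (nat (q mod int (p^2)))"
    and "module (A_ring p q) M"
    and "finite (carrier M)"
  shows "\<exists>n. \<forall>m \<in> carrier M. Phi q n \<odot>\<^bsub>M\<^esub> m = \<zero>\<^bsub>M\<^esub>"
proof -
  have cop: "coprime (p^2) (nat (q mod int (p^2)))" using assms(3) unfolding residue_primroot_def by blast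
  have nq: "\<not> int p dvd q"
  proof
    assume d: "int p dvd q"
    have p2: "int (p^2) > 0" using assms(1) prime_gt_0_nat by simp
    have "int p dvd q mod int (p^2)" using d by (simp add: dvd_mod power2_eq_square)
    moreover have "q mod int (p^2) \<ge> 0" using p2 by simp
    ultimately have "int p dvd int (nat (q mod int (p^2)))" by simp
    then have "p dvd nat (q mod int (p^2))" by (simp only: of_nat_dvd_iff)
    moreover have "p dvd p^2" by (simp add: power2_eq_square)
    ultimately have "p dvd 1" using cop by (metis coprime_common_divisor)
    then show False using assms(1) by simp
  qed
  show ?thesis by (rule chain_main[OF assms(1) nq assms(4,5)])
qed


end
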